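(* Let $V$ be a two-sided vector space of rank $n$. For a simultaneous basis $y_1,\dots,y_n$ of $V$, let $\phi_1,\dots,\phi_n\in{}^*V$ be given by $\phi_i(y_j)=\delta_{ij}$, and let $\eta:K\to{}^*V\otimes_KV$ be $\eta(a)=a\sum_i\phi_i\otimes y_i$. Then the image of $\eta$ is independent of the choice of simultaneous basis.
   Context: Let $k\subset K$ be fields. A two-sided vector space is a $K\otimes_kK$-module; left (resp. right) multiplication by $K$ is the action of $K\otimes1$ (resp. $1\otimes K$). Rank $n$ means dimension $n$ both as a left and as a right $K$-vector space; a simultaneous basis is a basis for both actions. The left dual ${}^*V$ is $\operatorname{Hom}_K({}_KV,K)$ (left $K$-linear maps) with action $(a\cdot\phi\cdot b)(x)=b\phi(xa)$. The tensor product ${}^*V\otimes_KV$ is formed using the right $K$-action on ${}^*V$ and the left $K$-action on $V$. *)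

theory Defs
  imports Complex_Main "HOL-Library.Poly_Mapping"
begin

definition is_subfield :: "'a::field set \<Rightarrow> bool" where
  "is_subfield k \<longleftrightarrow> 0 \<in> k \<and> 1 \<in> k \<and>
     (\<forall>a\<in>k. \<forall>b\<in>k. a + b \<in> k \<and> a * b \<in> k) \<and>
     (\<forall>a\<in>k. - a \<in> k \<and> inverse a \<in> k)"

text \<open>A two-sided vector space, i.e. a module over K tensor_k K.
  lm a x is the left action a x, rm b x is the right action x b.
  The two actions commute and agree on k.\<close>
definition two_sided_space ::
  "'a::field set \<Rightarrow> ('a \<Rightarrow> 'v::ab_group_add \<Rightarrow> 'v) \<Rightarrow> ('a \<Rightarrow> 'v \<Rightarrow> 'v) \<Rightarrow> bool" where
  "two_sided_space k lm rm \<longleftrightarrow> is_subfield k \<and> module lm \<and> module rm \<and>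
     (\<forall>a b x. lm a (rm b x) = rm b (lm a x)) \<and>
     (\<forall>c\<in>k. \<forall>x. lm c x = rm c x)"

definition has_dim :: "('a::field \<Rightarrow> 'v::ab_group_add \<Rightarrow> 'v) \<Rightarrow> nat \<Rightarrow> bool" where
  "has_dim s n \<longleftrightarrow> (\<exists>B. finite B \<and> card B = n \<and> \<not> module.dependent s B \<and> module.span s B = UNIV)"

definition tsv_rank :: "('a::field \<Rightarrow> 'v::ab_group_add \<Rightarrow> 'v) \<Rightarrow> ('a \<Rightarrow> 'v \<Rightarrow> 'v) \<Rightarrow> nat \<Rightarrow> bool" where
  "tsv_rank lm rm n \<longleftrightarrow> has_dim lm n \<and> has_dim rm n"

text \<open>A family y_0..y_(n-1) (indices shifted by one) which is a basis for both actions.\<close>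
definition is_basis_family :: "('a::field \<Rightarrow> 'v::ab_group_add \<Rightarrow> 'v) \<Rightarrow> nat \<Rightarrow> (nat \<Rightarrow> 'v) \<Rightarrow> bool" where
  "is_basis_family s n y \<longleftrightarrow> inj_on y {..<n} \<and> \<not> module.dependent s (y ` {..<n}) \<and>
     module.span s (y ` {..<n}) = UNIV"

definition simultaneous_basis ::
  "('a::field \<Rightarrow> 'v::ab_group_add \<Rightarrow> 'v) \<Rightarrow> ('a \<Rightarrow> 'v \<Rightarrow> 'v) \<Rightarrow> nat \<Rightarrow> (nat \<Rightarrow> 'v) \<Rightarrow> bool" where
  "simultaneous_basis lm rm n y \<longleftrightarrow> is_basis_family lm n y \<and> is_basis_family rm n y"

definition left_dual :: "('a::field \<Rightarrow> 'v::ab_group_add \<Rightarrow> 'v) \<Rightarrow> ('v \<Rightarrow> 'a) set" where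
  "left_dual lm = {\<phi>. Vector_Spaces.linear lm (*) \<phi>}"

text \<open>Actions on the left dual: (a.phi.b)(x) = b phi(x a).\<close>
definition dual_lact :: "('a::field \<Rightarrow> 'v \<Rightarrow> 'v) \<Rightarrow> 'a \<Rightarrow> ('v \<Rightarrow> 'a) \<Rightarrow> ('v \<Rightarrow> 'a)" where
  "dual_lact rm a \<phi> = (\<lambda>x. \<phi> (rm a x))"

definition dual_ract :: "('v \<Rightarrow> 'a::field) \<Rightarrow> 'a \<Rightarrow> ('v \<Rightarrow> 'a)" where
  "dual_ract \<phi> b = (\<lambda>x. b * \<phi> x)"

definition dual_family ::
  "('a::field \<Rightarrow> 'v::ab_group_add \<Rightarrow> 'v) \<Rightarrow> nat \<Rightarrow> (nat \<Rightarrow> 'v) \<Rightarrow> (nat \<Rightarrow> 'v \<Rightarrow> 'a) \<Rightarrow> bool" where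
  "dual_family lm n y \<phi> \<longleftrightarrow> (\<forall>i<n. \<phi> i \<in> left_dual lm \<and>
      (\<forall>j<n. \<phi> i (y j) = (if i = j then 1 else 0)))"

text \<open>Tensor product *V tensor_K V, built as the free abelian group on pairs
  modulo the subgroup generated by the balanced-bilinearity relations
  (right K-action on *V, left K-action on V).\<close>
definition tgen :: "('v \<Rightarrow> 'a) \<Rightarrow> 'v \<Rightarrow> (('v \<Rightarrow> 'a) \<times> 'v) \<Rightarrow>\<^sub>0 int" where
  "tgen \<phi> y = Poly_Mapping.single (\<phi>, y) 1"

definition tensor_relations ::
  "('a::field \<Rightarrow> 'v::ab_group_add \<Rightarrow> 'v) \<Rightarrow> ((('v \<Rightarrow> 'a) \<times> 'v) \<Rightarrow>\<^sub>0 int) set" where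
  "tensor_relations lm =
     {tgen (\<lambda>x. \<phi> x + \<psi> x) y - tgen \<phi> y - tgen \<psi> y | \<phi> \<psi> y. \<phi> \<in> left_dual lm \<and> \<psi> \<in> left_dual lm}
   \<union> {tgen \<phi> (y + z) - tgen \<phi> y - tgen \<phi> z | \<phi> y z. \<phi> \<in> left_dual lm}
   \<union> {tgen (dual_ract \<phi> b) y - tgen \<phi> (lm b y) | \<phi> b y. \<phi> \<in> left_dual lm}"

inductive_set zspan :: "('b::ab_group_add) set \<Rightarrow> 'b set" for R where
  zspan_zero: "0 \<in> zspan R"
| zspan_gen: "r \<in> R \<Longrightarrow> r \<in> zspan R"
| zspan_diff: "u \<in> zspan R \<Longrightarrow> w \<in> zspan R \<Longrightarrow> u - w \<in> zspan R"

text \<open>The element of *V tensor_K V represented by a formal sum t (its coset).\<close>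
definition tensor_class ::
  "('a::field \<Rightarrow> 'v::ab_group_add \<Rightarrow> 'v) \<Rightarrow> ((('v \<Rightarrow> 'a) \<times> 'v) \<Rightarrow>\<^sub>0 int)
     \<Rightarrow> ((('v \<Rightarrow> 'a) \<times> 'v) \<Rightarrow>\<^sub>0 int) set" where
  "tensor_class lm t = {s. s - t \<in> zspan (tensor_relations lm)}"

text \<open>eta(a) = a . sum_i phi_i tensor y_i = sum_i (a.phi_i) tensor y_i.\<close>
definition eta ::
  "('a::field \<Rightarrow> 'v::ab_group_add \<Rightarrow> 'v) \<Rightarrow> nat \<Rightarrow> (nat \<Rightarrow> 'v) \<Rightarrow> (nat \<Rightarrow> 'v \<Rightarrow> 'a) \<Rightarrow> 'a
     \<Rightarrow> (('v \<Rightarrow> 'a) \<times> 'v) \<Rightarrow>\<^sub>0 int" where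
  "eta rm n y \<phi> a = (\<Sum>i<n. tgen (dual_lact rm a (\<phi> i)) (y i))"

end

theory Submission
  imports Defs
begin


lemma module_mult_field: "module ((*) :: 'a::field \<Rightarrow> 'a \<Rightarrow> 'a)"
  by unfold_locales (auto simp: algebra_simps)

lemma ld_iff:
  assumes "module lm"
  shows "\<phi> \<in> left_dual lm \<longleftrightarrow> (\<forall>x y. \<phi> (x + y) = \<phi> x + \<phi> y) \<and> (\<forall>c x. \<phi> (lm c x) = c * \<phi> x)"
  using Vector_Spaces.linear_iff[of lm "(*)" \<phi>] module_iff_vector_space
    assms module_mult_field[unfolded module_iff_vector_space] unfolding left_dual_def by auto

lemma zspan_uminus: "u \<in> zspan R \<Longrightarrow> - u \<in> zspan R"
  using zspan_diff[OF zspan_zero, of u R] by simp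

lemma zspan_add: "u \<in> zspan R \<Longrightarrow> w \<in> zspan R \<Longrightarrow> u + w \<in> zspan R"
  using zspan_diff[of u R "- w"] zspan_uminus[of w R] by simp

lemma zspan_sum: "(\<And>i. i \<in> I \<Longrightarrow> f i \<in> zspan R) \<Longrightarrow> sum f I \<in> zspan R"
  by (induction I rule: infinite_finite_induct) (auto intro: zspan_zero zspan_add)

lemma zspan_sum_diff: "(\<And>i. i \<in> I \<Longrightarrow> f i - g i \<in> zspan R) \<Longrightarrow> sum f I - sum g I \<in> zspan R"
  using zspan_sum[of I "\<lambda>i. f i - g i" R] by (simp add: sum_subtractf)

lemma rel1: "\<phi> \<in> left_dual lm \<Longrightarrow> \<psi> \<in> left_dual lm \<Longrightarrow>
   tgen (\<lambda>x. \<phi> x + \<psi> x) y - tgen \<phi> y - tgen \<psi> y \<in> zspan (tensor_relations lm)"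
  by (rule zspan_gen) (unfold tensor_relations_def, blast)

lemma rel2: "\<phi> \<in> left_dual lm \<Longrightarrow>
   tgen \<phi> (y + z) - tgen \<phi> y - tgen \<phi> z \<in> zspan (tensor_relations lm)"
  by (rule zspan_gen) (unfold tensor_relations_def, blast)

lemma rel3: "\<phi> \<in> left_dual lm \<Longrightarrow>
   tgen \<phi> (lm b y) - tgen (dual_ract \<phi> b) y \<in> zspan (tensor_relations lm)"
proof -
  assume "\<phi> \<in> left_dual lm"
  then have "tgen (dual_ract \<phi> b) y - tgen \<phi> (lm b y) \<in> zspan (tensor_relations lm)"
    by (intro zspan_gen) (unfold tensor_relations_def, blast)
  from zspan_uminus[OF this] show ?thesis by simp
qed

lemma ld_zero: "module lm \<Longrightarrow> (\<lambda>x. 0) \<in> left_dual lm"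
  by (simp add: ld_iff)

lemma ld_add: "module lm \<Longrightarrow> \<phi> \<in> left_dual lm \<Longrightarrow> \<psi> \<in> left_dual lm \<Longrightarrow> (\<lambda>x. \<phi> x + \<psi> x) \<in> left_dual lm"
  by (simp add: ld_iff algebra_simps)

lemma ld_sum: "module lm \<Longrightarrow> (\<And>j. j \<in> I \<Longrightarrow> \<psi> j \<in> left_dual lm) \<Longrightarrow> (\<lambda>x. \<Sum>j\<in>I. \<psi> j x) \<in> left_dual lm"
proof (induction I rule: infinite_finite_induct)
  case (insert a F)
  then show ?case using ld_add[of lm "\<psi> a" "\<lambda>x. \<Sum>j\<in>F. \<psi> j x"] by simp
qed (auto simp: ld_zero)

lemma ld_ract: "module lm \<Longrightarrow> \<phi> \<in> left_dual lm \<Longrightarrow> dual_ract \<phi> b \<in> left_dual lm"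
  by (simp add: ld_iff dual_ract_def algebra_simps)

lemma ld_lact: "module lm \<Longrightarrow> module rm \<Longrightarrow> (\<forall>a b x. lm a (rm b x) = rm b (lm a x)) \<Longrightarrow>
   \<phi> \<in> left_dual lm \<Longrightarrow> dual_lact rm a \<phi> \<in> left_dual lm"
  by (simp add: ld_iff dual_lact_def module.scale_right_distrib) metis

lemma tgen_zero_right: "\<phi> \<in> left_dual lm \<Longrightarrow> tgen \<phi> 0 \<in> zspan (tensor_relations lm)"
  using zspan_uminus[OF rel2[of \<phi> lm 0 0]] by simp

lemma tgen_sum_right: "\<phi> \<in> left_dual lm \<Longrightarrow>
  tgen \<phi> (\<Sum>i\<in>I. f i) - (\<Sum>i\<in>I. tgen \<phi> (f i)) \<in> zspan (tensor_relations lm)"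
proof (induction I rule: infinite_finite_induct)
  case (infinite A)
  then show ?case using tgen_zero_right by simp
next
  case empty
  then show ?case using tgen_zero_right by simp
next
  case (insert a F)
  have "tgen \<phi> (f a + sum f F) - tgen \<phi> (f a) - tgen \<phi> (sum f F) +
    (tgen \<phi> (sum f F) - (\<Sum>i\<in>F. tgen \<phi> (f i))) \<in> zspan (tensor_relations lm)"
    using insert by (intro zspan_add rel2) auto
  then show ?case using insert by (simp add: algebra_simps)
qed

lemma tgen_zero_left: "module lm \<Longrightarrow> tgen (\<lambda>x. 0) y \<in> zspan (tensor_relations lm)"
  using zspan_uminus[OF rel1[of "\<lambda>x. 0" lm "\<lambda>x. 0" y]] ld_zero[of lm] by simp

lemma tgen_sum_left: "module lm \<Longrightarrow> (\<And>j. j \<in> I \<Longrightarrow> \<psi> j \<in> left_dual lm) \<Longrightarrow>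
  tgen (\<lambda>x. \<Sum>j\<in>I. \<psi> j x) y - (\<Sum>j\<in>I. tgen (\<psi> j) y) \<in> zspan (tensor_relations lm)"
proof (induction I rule: infinite_finite_induct)
  case (infinite A)
  then show ?case using tgen_zero_left by simp
next
  case empty
  then show ?case using tgen_zero_left by simp
next
  case (insert a F)
  have "tgen (\<lambda>x. \<psi> a x + (\<lambda>x. \<Sum>j\<in>F. \<psi> j x) x) y - tgen (\<psi> a) y - tgen (\<lambda>x. \<Sum>j\<in>F. \<psi> j x) y +
    (tgen (\<lambda>x. \<Sum>j\<in>F. \<psi> j x) y - (\<Sum>j\<in>F. tgen (\<psi> j) y)) \<in> zspan (tensor_relations lm)"
    using insert by (intro zspan_add rel1 ld_sum) auto
  then show ?case using insert by (simp add: algebra_simps)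
qed


lemma ld_zero_apply: "module lm \<Longrightarrow> \<phi> \<in> left_dual lm \<Longrightarrow> \<phi> 0 = 0"
proof -
  assume "module lm" "\<phi> \<in> left_dual lm"
  then have "\<phi> (0 + 0) = \<phi> 0 + \<phi> 0" using ld_iff[of lm \<phi>] by blast
  then have "\<phi> 0 = \<phi> 0 + \<phi> 0" by simp
  then show ?thesis by (metis add_cancel_right_right)
qed

lemma ld_sum_apply: "module lm \<Longrightarrow> \<phi> \<in> left_dual lm \<Longrightarrow>
   \<phi> (\<Sum>j\<in>I. lm (c j) (w j)) = (\<Sum>j\<in>I. c j * \<phi> (w j))"
proof (induction I rule: infinite_finite_induct)
  case (insert a F)
  then show ?case using ld_iff[of lm \<phi>] by simp
qed (auto simp: ld_zero_apply)

lemma expand: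
  assumes m: "module lm" and b: "is_basis_family lm n y" and d: "dual_family lm n y \<phi>"
  shows "v = (\<Sum>i<n. lm (\<phi> i v) (y i))"
proof -
  interpret module lm by (rule m)
  have "v \<in> span (y ` {..<n})" using b unfolding is_basis_family_def by simp
  also have "\<dots> = range (\<lambda>u. \<Sum>w\<in>y ` {..<n}. lm (u w) w)"
    by (rule span_finite) simp
  finally obtain u where u: "v = (\<Sum>w\<in>y ` {..<n}. lm (u w) w)"
    by blast
  have inj: "inj_on y {..<n}" using b unfolding is_basis_family_def by simp
  have v: "v = (\<Sum>i<n. lm (u (y i)) (y i))"
    unfolding u sum.reindex[OF inj] o_def ..
  have c: "\<phi> j v = u (y j)" if j: "j < n" for j
  proof -
    have ld: "\<phi> j \<in> left_dual lm" using d j unfolding dual_family_def by blast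
    have "\<phi> j v = (\<Sum>i<n. u (y i) * \<phi> j (y i))"
      by (subst v, rule ld_sum_apply[OF m ld])
    also have "\<dots> = (\<Sum>i<n. if j = i then u (y i) else 0)"
      using d j unfolding dual_family_def by (intro sum.cong) auto
    also have "\<dots> = u (y j)" using j by simp
    finally show ?thesis .
  qed
  have "(\<Sum>i<n. lm (u (y i)) (y i)) = (\<Sum>i<n. lm (\<phi> i v) (y i))"
    by (rule sum.cong) (simp_all add: c)
  then show ?thesis using v by simp
qed

lemma class_eq: "s - t \<in> zspan (tensor_relations lm) \<Longrightarrow> tensor_class lm s = tensor_class lm t"
proof -
  assume st: "s - t \<in> zspan (tensor_relations lm)"
  have "u - s \<in> zspan (tensor_relations lm) \<longleftrightarrow> u - t \<in> zspan (tensor_relations lm)" for u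
  proof
    assume "u - s \<in> zspan (tensor_relations lm)"
    from zspan_add[OF this st] show "u - t \<in> zspan (tensor_relations lm)" by simp
  next
    assume "u - t \<in> zspan (tensor_relations lm)"
    from zspan_diff[OF this st] show "u - s \<in> zspan (tensor_relations lm)" by simp
  qed
  then show ?thesis unfolding tensor_class_def by blast
qed



lemma eta_eq:
  assumes ts: "two_sided_space k lm rm"
    and b: "simultaneous_basis lm rm n y"
    and d: "dual_family lm n y \<phi>"
    and b': "simultaneous_basis lm rm n y'"
    and d': "dual_family lm n y' \<phi>'"
  shows "eta rm n y' \<phi>' a - eta rm n y \<phi> a \<in> zspan (tensor_relations lm)"
proof -
  let ?Z = "zspan (tensor_relations lm)"
  have m: "module lm" and mr: "module rm" and com: "\<forall>a b x. lm a (rm b x) = rm b (lm a x)"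
    using ts unfolding two_sided_space_def by auto
  have bl: "is_basis_family lm n y" and bl': "is_basis_family lm n y'"
    using b b' unfolding simultaneous_basis_def by auto
  define \<psi> where "\<psi> j = dual_lact rm a (\<phi>' j)" for j
  define c where "c j i = \<phi> i (y' j)" for j i
  have ld\<phi>: "\<phi> i \<in> left_dual lm" if "i < n" for i using d that unfolding dual_family_def by blast
  have ld\<psi>: "\<psi> j \<in> left_dual lm" if "j < n" for j
    unfolding \<psi>_def using d' that unfolding dual_family_def by (intro ld_lact[OF m mr com]) blast
  define E1 where "E1 = (\<Sum>j<n. tgen (\<psi> j) (y' j))"
  define E2 where "E2 = (\<Sum>j<n. tgen (\<psi> j) (\<Sum>i<n. lm (c j i) (y i)))"
  define E3 where "E3 = (\<Sum>j<n. \<Sum>i<n. tgen (\<psi> j) (lm (c j i) (y i)))"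
  define E4 where "E4 = (\<Sum>j<n. \<Sum>i<n. tgen (dual_ract (\<psi> j) (c j i)) (y i))"
  define E5 where "E5 = (\<Sum>i<n. \<Sum>j<n. tgen (dual_ract (\<psi> j) (c j i)) (y i))"
  define E6 where "E6 = (\<Sum>i<n. tgen (\<lambda>x. \<Sum>j<n. dual_ract (\<psi> j) (c j i) x) (y i))"
  have e1: "eta rm n y' \<phi>' a = E1" unfolding eta_def E1_def \<psi>_def ..
  have e12: "E1 = E2" unfolding E1_def E2_def c_def
    using expand[OF m bl d] by (metis (no_types))
  have e23: "E2 - E3 \<in> ?Z" unfolding E2_def E3_def
    by (intro zspan_sum_diff tgen_sum_right ld\<psi>) simp
  have e34: "E3 - E4 \<in> ?Z" unfolding E3_def E4_def
    by (intro zspan_sum_diff rel3 ld\<psi>) simp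
  have e45: "E4 = E5" unfolding E4_def E5_def by (rule sum.swap)
  have e65: "E6 - E5 \<in> ?Z" unfolding E6_def E5_def
    by (intro zspan_sum_diff tgen_sum_left[OF m] ld_ract[OF m] ld\<psi>) simp
  have fun_eq: "(\<lambda>x. \<Sum>j<n. dual_ract (\<psi> j) (c j i) x) = dual_lact rm a (\<phi> i)" if i: "i < n" for i
  proof
    fix x
    have "dual_lact rm a (\<phi> i) x = \<phi> i (\<Sum>j<n. lm (\<phi>' j (rm a x)) (y' j))"
      unfolding dual_lact_def using expand[OF m bl' d', of "rm a x"] by simp
    also have "\<dots> = (\<Sum>j<n. \<phi>' j (rm a x) * \<phi> i (y' j))"
      by (rule ld_sum_apply[OF m ld\<phi>[OF i]])
    finally show "(\<Sum>j<n. dual_ract (\<psi> j) (c j i) x) = dual_lact rm a (\<phi> i) x"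
      unfolding dual_ract_def \<psi>_def c_def dual_lact_def by (simp add: mult.commute)
  qed
  have e6: "E6 = eta rm n y \<phi> a" unfolding E6_def eta_def
    by (rule sum.cong) (simp_all add: fun_eq)
  have "E1 - E6 = (E2 - E3) + (E3 - E4) - (E6 - E5)" using e12 e45 by simp
  also have "\<dots> \<in> ?Z" by (rule zspan_diff[OF zspan_add[OF e23 e34] e65])
  finally show ?thesis using e1 e6 by simp
qed

theorem proposition3p9:
  fixes k :: "'a::field set"
    and lm rm :: "'a \<Rightarrow> 'v::ab_group_add \<Rightarrow> 'v"
    and n :: nat
    and y y' :: "nat \<Rightarrow> 'v"
    and \<phi> \<phi>' :: "nat \<Rightarrow> 'v \<Rightarrow> 'a"
  assumes "two_sided_space k lm rm"
    and "tsv_rank lm rm n"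
    and "simultaneous_basis lm rm n y"
    and "dual_family lm n y \<phi>"
    and "simultaneous_basis lm rm n y'"
    and "dual_family lm n y' \<phi>'"
  shows "tensor_class lm ` range (eta rm n y \<phi>) = tensor_class lm ` range (eta rm n y' \<phi>')"
proof -
  have "tensor_class lm (eta rm n y \<phi> a) = tensor_class lm (eta rm n y' \<phi>' a)" for a
    using class_eq[OF eta_eq[OF assms(1,3,4,5,6)]] by simp
  then show ?thesis by (simp add: image_image)
qed

end
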